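(* Let $S$ be a finite $2$-group and suppose there are $A,B\in\mathcal{A}(S)$ with $AB=S$. If $C_B(a)=A\cap B$ for every $a\in A\setminus(A\cap B)$, then $\mathcal{A}(S)=\{A,B\}$ and every involution of $S$ lies in $A\cup B$.
   Context: For a $p$-group $S$, $\mathcal{A}(S)$ denotes the set of elementary abelian subgroups of $S$ of maximal rank (maximal order). *)

theory Defs
  imports "HOL-Algebra.Algebra"
begin

definition finite_p_group :: "('a, 'b) monoid_scheme \<Rightarrow> nat \<Rightarrow> bool" where
  "finite_p_group G p \<longleftrightarrow> group G \<and> Factorial_Ring.prime p \<and> finite (carrier G) \<and> (\<exists>n. order G = p ^ n)"

definition elem_abelian_sub :: "('a, 'b) monoid_scheme \<Rightarrow> nat \<Rightarrow> 'a set \<Rightarrow> bool" where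
  "elem_abelian_sub G p E \<longleftrightarrow> subgroup E G \<and>
     (\<forall>x\<in>E. \<forall>y\<in>E. x \<otimes>\<^bsub>G\<^esub> y = y \<otimes>\<^bsub>G\<^esub> x) \<and>
     (\<forall>x\<in>E. x [^]\<^bsub>G\<^esub> p = \<one>\<^bsub>G\<^esub>)"

text \<open>\<open>\<A>(S)\<close>: elementary abelian subgroups of maximal order (equivalently maximal rank).\<close>
definition max_elem_abelian :: "('a, 'b) monoid_scheme \<Rightarrow> nat \<Rightarrow> 'a set set" where
  "max_elem_abelian G p = {E. elem_abelian_sub G p E \<and>
     (\<forall>F. elem_abelian_sub G p F \<longrightarrow> card F \<le> card E)}"

definition centralizer_in :: "('a, 'b) monoid_scheme \<Rightarrow> 'a set \<Rightarrow> 'a \<Rightarrow> 'a set" where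
  "centralizer_in G B a = {b \<in> B. a \<otimes>\<^bsub>G\<^esub> b = b \<otimes>\<^bsub>G\<^esub> a}"

definition involutions :: "('a, 'b) monoid_scheme \<Rightarrow> 'a set" where
  "involutions G = {x \<in> carrier G. x \<noteq> \<one>\<^bsub>G\<^esub> \<and> x [^]\<^bsub>G\<^esub> (2::nat) = \<one>\<^bsub>G\<^esub>}"

end

theory Submission
  imports Defs
begin

lemma (in group) sq_one:
  assumes "x \<in> carrier G" "x [^] (2::nat) = \<one>"
  shows "x \<otimes> x = \<one>"
proof -
  have "x [^] (2::nat) = x \<otimes> x" using assms(1)
    by (simp add: numeral_2_eq_2 nat_pow_Suc)
  thus ?thesis using assms(2) by simp
qed

lemma (in group) union_subgroups:
  assumes "subgroup E G" "subgroup A G" "subgroup B G" "E \<subseteq> A \<union> B"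
  shows "E \<subseteq> A \<or> E \<subseteq> B"
proof (rule ccontr)
  assume "\<not> (E \<subseteq> A \<or> E \<subseteq> B)"
  then obtain x y where x: "x \<in> E" "x \<notin> A" and y: "y \<in> E" "y \<notin> B" by blast
  have xB: "x \<in> B" and yA: "y \<in> A" using x y assms(4) by blast+
  have xc: "x \<in> carrier G" and yc: "y \<in> carrier G"
    using x y assms(1) subgroup.subset by blast+
  have "x \<otimes> y \<in> E" using subgroup.m_closed[OF assms(1) x(1) y(1)] .
  hence "x \<otimes> y \<in> A \<or> x \<otimes> y \<in> B" using assms(4) by blast
  thus False
  proof
    assume h: "x \<otimes> y \<in> A"
    have "(x \<otimes> y) \<otimes> inv y \<in> A"
      using subgroup.m_closed[OF assms(2) h subgroup.m_inv_closed[OF assms(2) yA]] .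
    moreover have "(x \<otimes> y) \<otimes> inv y = x" using xc yc by (simp add: m_assoc)
    ultimately show False using x by simp
  next
    assume h: "x \<otimes> y \<in> B"
    have "inv x \<otimes> (x \<otimes> y) \<in> B"
      using subgroup.m_closed[OF assms(3) subgroup.m_inv_closed[OF assms(3) xB] h] .
    moreover have "inv x \<otimes> (x \<otimes> y) = y" using xc yc by (simp add: m_assoc[symmetric])
    ultimately show False using y by simp
  qed
qed

theorem mainTheorem5:
  fixes S :: "('a, 'b) monoid_scheme" and A B :: "'a set"
  assumes "finite_p_group S 2"
    and "A \<in> max_elem_abelian S 2" and "B \<in> max_elem_abelian S 2"
    and "A <#>\<^bsub>S\<^esub> B = carrier S"
    and "\<forall>a \<in> A - (A \<inter> B). centralizer_in S B a = A \<inter> B"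
  shows "max_elem_abelian S 2 = {A, B} \<and> involutions S \<subseteq> A \<union> B"
proof -
  have grp: "group S" and fin: "finite (carrier S)" using assms(1) unfolding finite_p_group_def by auto
  interpret group S by (rule grp)
  have eA: "elem_abelian_sub S 2 A" and eB: "elem_abelian_sub S 2 B"
    and cA: "\<forall>F. elem_abelian_sub S 2 F \<longrightarrow> card F \<le> card A"
    and cB: "\<forall>F. elem_abelian_sub S 2 F \<longrightarrow> card F \<le> card B"
    using assms(2,3) unfolding max_elem_abelian_def by auto
  have sA: "subgroup A S" and sB: "subgroup B S"
    and A2: "\<forall>x\<in>A. x [^]\<^bsub>S\<^esub> (2::nat) = \<one>\<^bsub>S\<^esub>" and B2: "\<forall>x\<in>B. x [^]\<^bsub>S\<^esub> (2::nat) = \<one>\<^bsub>S\<^esub>"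
    using eA eB unfolding elem_abelian_sub_def by auto
  have key: "x \<in> A \<union> B" if xc: "x \<in> carrier S" and x2: "x [^]\<^bsub>S\<^esub> (2::nat) = \<one>\<^bsub>S\<^esub>" for x
  proof -
    from xc assms(4) obtain a b where ab: "a \<in> A" "b \<in> B" "x = a \<otimes>\<^bsub>S\<^esub> b"
      unfolding set_mult_def by blast
    have ac: "a \<in> carrier S" and bc: "b \<in> carrier S"
      using ab sA sB subgroup.subset by blast+
    show ?thesis
    proof (cases "a \<in> B \<or> b \<in> A")
      case True
      then show ?thesis
        using ab subgroup.m_closed[OF sA] subgroup.m_closed[OF sB] by blast
    next
      case False
      have aa: "a \<otimes>\<^bsub>S\<^esub> a = \<one>\<^bsub>S\<^esub>" using group.sq_one[OF grp ac] A2 ab(1) by simp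
      have bb: "b \<otimes>\<^bsub>S\<^esub> b = \<one>\<^bsub>S\<^esub>" using group.sq_one[OF grp bc] B2 ab(2) by simp
      have xx: "(a \<otimes>\<^bsub>S\<^esub> b) \<otimes>\<^bsub>S\<^esub> (a \<otimes>\<^bsub>S\<^esub> b) = \<one>\<^bsub>S\<^esub>" using group.sq_one[OF grp xc x2] ab(3) by simp
      have "b \<otimes>\<^bsub>S\<^esub> a = a \<otimes>\<^bsub>S\<^esub> (a \<otimes>\<^bsub>S\<^esub> b \<otimes>\<^bsub>S\<^esub> (a \<otimes>\<^bsub>S\<^esub> b)) \<otimes>\<^bsub>S\<^esub> b"
        proof -
        have "a \<otimes>\<^bsub>S\<^esub> (a \<otimes>\<^bsub>S\<^esub> b \<otimes>\<^bsub>S\<^esub> (a \<otimes>\<^bsub>S\<^esub> b)) \<otimes>\<^bsub>S\<^esub> b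
              = (a \<otimes>\<^bsub>S\<^esub> a) \<otimes>\<^bsub>S\<^esub> (b \<otimes>\<^bsub>S\<^esub> a) \<otimes>\<^bsub>S\<^esub> (b \<otimes>\<^bsub>S\<^esub> b)"
          using ac bc by (simp add: m_assoc)
        thus ?thesis using aa bb ac bc by simp
      qed
      also have "\<dots> = a \<otimes>\<^bsub>S\<^esub> b" using xx ac bc by simp
      finally have "a \<otimes>\<^bsub>S\<^esub> b = b \<otimes>\<^bsub>S\<^esub> a" by simp
      hence "b \<in> centralizer_in S B a" using ab unfolding centralizer_in_def by simp
      hence "b \<in> A" using assms(5) ab False by auto
      thus ?thesis using False by simp
    qed
  qed
  have inv: "involutions S \<subseteq> A \<union> B"
    using key unfolding involutions_def by auto
  have finA: "finite A" and finB: "finite B"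
    using fin sA sB subgroup.subset finite_subset by blast+
  have "max_elem_abelian S 2 \<subseteq> {A, B}"
  proof
    fix E assume "E \<in> max_elem_abelian S 2"
    hence eE: "elem_abelian_sub S 2 E" and cE: "\<forall>F. elem_abelian_sub S 2 F \<longrightarrow> card F \<le> card E"
      unfolding max_elem_abelian_def by auto
    have sE: "subgroup E S" and E2: "\<forall>x\<in>E. x [^]\<^bsub>S\<^esub> (2::nat) = \<one>\<^bsub>S\<^esub>"
      using eE unfolding elem_abelian_sub_def by auto
    have "E \<subseteq> A \<union> B" using key E2 subgroup.subset[OF sE] by blast
    hence "E \<subseteq> A \<or> E \<subseteq> B" using group.union_subgroups[OF grp sE sA sB] by blast
    thus "E \<in> {A, B}"
    proof
      assume h: "E \<subseteq> A"
      have "card A \<le> card E" using cE eA by blast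
      moreover have "card E \<le> card A" by (rule card_mono[OF finA h])
      ultimately have "card E = card A" by (rule antisym[rotated])
      hence "E = A" by (rule card_subset_eq[OF finA h])
      thus ?thesis by simp
    next
      assume h: "E \<subseteq> B"
      have "card B \<le> card E" using cE eB by blast
      moreover have "card E \<le> card B" by (rule card_mono[OF finB h])
      ultimately have "card E = card B" by (rule antisym[rotated])
      hence "E = B" by (rule card_subset_eq[OF finB h])
      thus ?thesis by simp
    qed
  qed
  thus ?thesis using inv assms(2,3) by blast
qed

end
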